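(* Assume (A1), (A2), (A3) (see context). If $\mathbb P$ has finite range of dependence or has negative association, then there is a constant $c>0$ such that $\mathbb P(\xi(\Lambda_\ell)=0)\le e^{-c\ell^d}$ for all $\ell\ge1$. In particular $\mathbb P$ satisfies Condition $C(\alpha)$ for every $\alpha>0$.
   Context: $\Lambda_\ell=[-\ell,\ell]^d$. $\mathcal N$ = locally finite subsets of $\mathbb R^d$, identified with counting measures ($\xi(A)=\#(\xi\cap A)$), with $\sigma$-algebra generated by $\xi\mapsto\xi(A)$; $\tau_x\xi:=\xi-x$. $\mathrm{DT}(\xi)$: graph on $\xi$ with edges $\{x,y\}$ whose Voronoi cells $\mathrm{Vor}(\cdot|\xi)=\{y:|y-\cdot|\le|y-z|\,\forall z\in\xi\}$ share a $(d-1)$-dimensional face. Setting: $(\Omega,\mathcal F,\mathcal P)$ probability space with measurable $\mathbb R^d$-action $(\theta_x)$; simple point process $\omega\mapsto\hat\omega\in\mathcal N$ with law $\mathbb P$; measurable symmetric conductances $c_{x,y}(\omega)\ge0$ vanishing off the edges of $\mathrm{DT}(\hat\omega)$. (A1) $\mathcal P$ is $\theta$-invariant and $\mathcal P(\hat\omega=\emptyset)=0$; (A2) $m:=\mathbb E[\xi([0,1]^d)]\in(0,\infty)$; (A3) on a $\theta$-invariant measurable full-measure set, $\widehat{\theta_x\omega}=\tau_x\hat\omega$ and $c_{y-x,z-x}(\theta_x\omega)=c_{y,z}(\omega)$ for all $x$ and edges $\{y,z\}$. Finite range of dependence: $\exists L>0$ such that $\xi\cap A$, $\xi\cap B$ are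 independent under $\mathbb P$ for Borel $A,B$ at Euclidean distance $\ge L$. Negative association: for all $n,k$, weakly increasing $f:\mathbb R_+^n\to\mathbb R$, $g:\mathbb R_+^k\to\mathbb R$, pairwise disjoint bounded Borel $A_1,\dots,A_n,B_1,\dots,B_k$: $\mathrm{Cov}_{\mathbb P}(f(\xi(A_1),\dots,\xi(A_n)),g(\xi(B_1),\dots,\xi(B_k)))\le0$ whenever both have finite second moments. Condition $C(\alpha)$: $\exists\kappa>0$ with $\mathbb P(\xi(\Lambda_\ell)=0)\le\kappa\ell^{-\alpha}$ for all $\ell\ge1$. *)

theory Defs
  imports "HOL-Probability.Probability"
begin

definition lf_sets :: "'a::euclidean_space set set" where
  "lf_sets = {\<xi>. \<forall>K. bounded K \<longrightarrow> finite (\<xi> \<inter> K)}"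

text \<open>Counting measure xi(A); used only for bounded A, where it is finite.\<close>
definition pcount :: "'a::euclidean_space set \<Rightarrow> 'a set \<Rightarrow> nat" where
  "pcount \<xi> A = card (\<xi> \<inter> A)"

definition N_space :: "'a::euclidean_space set measure" where
  "N_space = sigma lf_sets
     {{\<xi> \<in> lf_sets. pcount \<xi> A = k} | A k. A \<in> sets borel \<and> bounded A}"

definition Lambda :: "real \<Rightarrow> 'a::euclidean_space set" where
  "Lambda l = cbox (- (l *\<^sub>R One)) (l *\<^sub>R One)"

definition Vor :: "'a::euclidean_space set \<Rightarrow> 'a \<Rightarrow> 'a set" where
  "Vor \<xi> x = {y. \<forall>z\<in>\<xi>. dist y x \<le> dist y z}"

text \<open>{x,y} is an edge of DT(xi): the Voronoi cells share a (d-1)-dimensional face.\<close>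
definition DT_edge :: "'a::euclidean_space set \<Rightarrow> 'a \<Rightarrow> 'a \<Rightarrow> bool" where
  "DT_edge \<xi> x y \<longleftrightarrow> x \<in> \<xi> \<and> y \<in> \<xi> \<and> x \<noteq> y \<and>
     aff_dim (Vor \<xi> x \<inter> Vor \<xi> y) = int DIM('a) - 1"

definition finite_range_dep :: "'a::euclidean_space set measure \<Rightarrow> bool" where
  "finite_range_dep P \<longleftrightarrow> (\<exists>L>0. \<forall>A\<in>sets borel. \<forall>B\<in>sets borel.
      setdist A B \<ge> L \<longrightarrow>
      prob_space.indep_var P N_space (\<lambda>\<xi>. \<xi> \<inter> A) N_space (\<lambda>\<xi>. \<xi> \<inter> B))"

text \<open>f : R_+^n -> R weakly increasing, with R_+^n encoded as functions nat => real
  vanishing outside {..<n}.\<close>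
definition incr_on_orthant :: "nat \<Rightarrow> ((nat \<Rightarrow> real) \<Rightarrow> real) \<Rightarrow> bool" where
  "incr_on_orthant n f \<longleftrightarrow> (\<forall>u v. (\<forall>i<n. 0 \<le> u i \<and> u i \<le> v i) \<and>
      (\<forall>i\<ge>n. u i = 0 \<and> v i = 0) \<longrightarrow> f u \<le> f v)"

definition count_vec :: "nat \<Rightarrow> (nat \<Rightarrow> 'a::euclidean_space set) \<Rightarrow> 'a set \<Rightarrow> nat \<Rightarrow> real" where
  "count_vec n A \<xi> = (\<lambda>i. if i < n then real (pcount \<xi> (A i)) else 0)"

definition neg_assoc :: "'a::euclidean_space set measure \<Rightarrow> bool" where
  "neg_assoc P \<longleftrightarrow> (\<forall>n k f g A B.
      incr_on_orthant n f \<and> incr_on_orthant k g \<and>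
      (\<forall>i<n. A i \<in> sets borel \<and> bounded (A i)) \<and>
      (\<forall>j<k. B j \<in> sets borel \<and> bounded (B j)) \<and>
      disjoint_family_on A {..<n} \<and> disjoint_family_on B {..<k} \<and>
      (\<forall>i<n. \<forall>j<k. A i \<inter> B j = {}) \<and>
      integrable P (\<lambda>\<xi>. (f (count_vec n A \<xi>))\<^sup>2) \<and>
      integrable P (\<lambda>\<xi>. (g (count_vec k B \<xi>))\<^sup>2) \<longrightarrow>
      (\<integral>\<xi>. f (count_vec n A \<xi>) * g (count_vec k B \<xi>) \<partial>P)
        - (\<integral>\<xi>. f (count_vec n A \<xi>) \<partial>P) * (\<integral>\<xi>. g (count_vec k B \<xi>) \<partial>P) \<le> 0)"

definition condition_C :: "'a::euclidean_space set measure \<Rightarrow> real \<Rightarrow> bool" where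
  "condition_C P \<alpha> \<longleftrightarrow> (\<exists>\<kappa>>0. \<forall>l\<ge>1.
      measure P {\<xi> \<in> space P. pcount \<xi> (Lambda l) = 0} \<le> \<kappa> * l powr (-\<alpha>))"

end

theory Submission
  imports Defs
begin


lemma One_inner_Basis: "b \<in> Basis \<Longrightarrow> (One::'a::euclidean_space) \<bullet> b = 1"
  by (simp add: inner_sum_left inner_Basis sum.delta[OF finite_Basis] if_distrib cong: if_cong)

lemma space_N: "space N_space = lf_sets"
  unfolding N_space_def by (rule space_measure_of) auto

lemma E_sets: "A \<in> sets borel \<Longrightarrow> bounded A \<Longrightarrow> {\<xi> \<in> lf_sets. pcount \<xi> A = k} \<in> sets N_space"
  unfolding N_space_def
  by (subst sets_measure_of) (auto intro!: sigma_sets.Basic)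

lemma pcount0_iff: "\<xi> \<in> lf_sets \<Longrightarrow> bounded A \<Longrightarrow> pcount \<xi> A = 0 \<longleftrightarrow> \<xi> \<inter> A = {}"
  unfolding lf_sets_def pcount_def by auto

lemma grid:
  fixes l s :: real
  assumes l: "1 \<le> l" and s: "1 \<le> s"
  shows "\<exists>F::'a::euclidean_space set. finite F \<and> (l/s)^DIM('a) \<le> real (card F) \<and>
     (\<forall>x\<in>F. cbox x (x+One) \<subseteq> Lambda l) \<and>
     (\<forall>x\<in>F. \<forall>y\<in>F. x \<noteq> y \<longrightarrow> (\<forall>a\<in>cbox x (x+One). \<forall>b\<in>cbox y (y+One). s - 1 \<le> dist a b))"
proof -
  define m where "m = nat \<lfloor>(2*l-1)/s\<rfloor> + 1"
  define g :: "('a \<Rightarrow> nat) \<Rightarrow> 'a" where "g k = (-l) *\<^sub>R One + (\<Sum>b\<in>Basis. (s * real (k b)) *\<^sub>R b)" for k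
  define K :: "('a \<Rightarrow> nat) set" where "K = PiE Basis (\<lambda>_. {..<m})"
  define F where "F = g ` K"
  have gb: "g k \<bullet> b = -l + s * real (k b)" if "b \<in> Basis" for k b
    using that unfolding g_def by (simp only: inner_add_left inner_scaleR_left inner_sum_left_Basis One_inner_Basis)
  have ext: "k = k'" if "k \<in> K" "k' \<in> K" "\<And>b. b \<in> Basis \<Longrightarrow> k b = k' b" for k k'
    using that unfolding K_def by (metis PiE_ext)
  have inj: "inj_on g K"
  proof (rule inj_onI)
    fix k k' assume kk: "k \<in> K" "k' \<in> K" "g k = g k'"
    show "k = k'"
    proof (rule ext[OF kk(1,2)])
      fix b :: 'a assume b: "b \<in> Basis"
      have "g k \<bullet> b = g k' \<bullet> b" using kk(3) by simp
      then have "s * real (k b) = s * real (k' b)" unfolding gb[OF b] by simp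
      then show "k b = k' b" using s by simp
    qed
  qed
  have finK: "finite K" unfolding K_def by (simp add: finite_PiE)
  have cardF: "card F = m ^ DIM('a)"
    using card_image[OF inj] unfolding F_def K_def by (simp add: card_PiE)
  have fl0: "0 \<le> (2*l-1)/s" using l s by simp
  have "(2*l-1)/s < real m"
    unfolding m_def using fl0 by (simp add: of_nat_nat) linarith
  moreover have "l/s \<le> (2*l-1)/s" using l s by (simp add: divide_right_mono)
  ultimately have lm: "l/s \<le> real m" by linarith
  have "(l/s)^DIM('a) \<le> real m ^ DIM('a)"
    by (rule power_mono[OF lm]) (use l s in simp)
  then have c1: "(l/s)^DIM('a) \<le> real (card F)" by (simp add: cardF)
  have sub: "cbox x (x+One) \<subseteq> Lambda l" if "x \<in> F" for x
  proof
    fix a assume a: "a \<in> cbox x (x+One)"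
    obtain k where k: "k \<in> K" "x = g k" using \<open>x \<in> F\<close> F_def by auto
    show "a \<in> Lambda l"
      unfolding Lambda_def mem_box
    proof (intro ballI conjI)
      fix b :: 'a assume b: "b \<in> Basis"
      have kb: "k b < m" using k b unfolding K_def by auto
      have "k b \<le> nat \<lfloor>(2*l-1)/s\<rfloor>" using kb unfolding m_def by simp
      then have "real (k b) \<le> real (nat \<lfloor>(2*l-1)/s\<rfloor>)" by (simp only: of_nat_le_iff)
      also have "\<dots> = of_int \<lfloor>(2*l-1)/s\<rfloor>" using fl0 by simp
      finally have "s * real (k b) \<le> s * \<lfloor>(2*l-1)/s\<rfloor>"
        using s by (intro mult_left_mono) auto
      also have "\<dots> \<le> s * ((2*l-1)/s)" using s by (intro mult_left_mono) auto
      also have "\<dots> = 2*l-1" using s by simp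
      finally have kb': "s * real (k b) \<le> 2*l-1" .
      have nn: "0 \<le> s * real (k b)" using s by simp
      have "x \<bullet> b \<le> a \<bullet> b" "a \<bullet> b \<le> x \<bullet> b + 1"
        using a b by (auto simp: mem_box inner_add_left One_inner_Basis)
      then show "(- (l *\<^sub>R One)) \<bullet> b \<le> a \<bullet> b" "a \<bullet> b \<le> (l *\<^sub>R One) \<bullet> b"
      proof -
        have xb: "x \<bullet> b = -l + s * real (k b)" using gb[OF b, of k] k by simp
        have "-l \<le> a \<bullet> b" "a \<bullet> b \<le> l"
          using xb kb' nn \<open>x \<bullet> b \<le> a \<bullet> b\<close> \<open>a \<bullet> b \<le> x \<bullet> b + 1\<close> by linarith+
        then show "(- (l *\<^sub>R One)) \<bullet> b \<le> a \<bullet> b" "a \<bullet> b \<le> (l *\<^sub>R One) \<bullet> b"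
          using b by (simp_all add: One_inner_Basis)
      qed
    qed
  qed
  have sep: "s - 1 \<le> dist a a'" if "x \<in> F" "y \<in> F" "x \<noteq> y" "a \<in> cbox x (x+One)" "a' \<in> cbox y (y+One)" for x y a a'
  proof -
    obtain k where k: "k \<in> K" "x = g k" using \<open>x \<in> F\<close> F_def by auto
    obtain k' where k': "k' \<in> K" "y = g k'" using \<open>y \<in> F\<close> F_def by auto
    have "k \<noteq> k'" using k k' that(3) by auto
    then obtain b :: 'a where b: "b \<in> Basis" "k b \<noteq> k' b" using ext[OF k(1) k'(1)] by blast
    have "1 \<le> \<bar>real (k b) - real (k' b)\<bar>" using b(2) by linarith
    then have "s \<le> s * \<bar>real (k b) - real (k' b)\<bar>" using s by simp
    also have "\<dots> = \<bar>x \<bullet> b - y \<bullet> b\<bar>" using gb[OF b(1), of k] gb[OF b(1), of k'] k k' s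
      by (simp add: abs_mult right_diff_distrib[symmetric])
    finally have xy: "s \<le> \<bar>x \<bullet> b - y \<bullet> b\<bar>" .
    have "x \<bullet> b \<le> a \<bullet> b" "a \<bullet> b \<le> x \<bullet> b + 1" "y \<bullet> b \<le> a' \<bullet> b" "a' \<bullet> b \<le> y \<bullet> b + 1"
      using that(4,5) b by (auto simp: mem_box inner_add_left One_inner_Basis)
    then have "s - 1 \<le> \<bar>(a - a') \<bullet> b\<bar>" using xy by (simp add: inner_diff_left)
    also have "\<dots> \<le> norm (a - a')" by (rule Basis_le_norm[OF b(1)])
    finally show ?thesis by (simp add: dist_norm)
  qed
  show ?thesis
    by (rule exI[of _ F]) (use finK c1 sub sep F_def in auto)
qed

definition qP :: "'a::euclidean_space set measure \<Rightarrow> 'a set \<Rightarrow> real" where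
  "qP P A = measure P {\<xi> \<in> space P. pcount \<xi> A = 0}"

lemma prod_bound:
  fixes P :: "'a::euclidean_space set measure"
  assumes prob: "prob_space P" and sP: "sets P = sets N_space"
    and stat: "\<And>x. qP P (cbox x (x+One)) = q0"
    and sepL: "\<And>A B. A \<in> sets borel \<Longrightarrow> bounded A \<Longrightarrow> B \<in> sets borel \<Longrightarrow> bounded B \<Longrightarrow>
        (\<forall>a\<in>A. \<forall>b\<in>B. L \<le> dist a b) \<Longrightarrow> qP P (A \<union> B) \<le> qP P A * qP P B"
    and fin: "finite F"
    and sep: "\<forall>x\<in>F. \<forall>y\<in>F. x \<noteq> y \<longrightarrow> (\<forall>a\<in>cbox x (x+One). \<forall>b\<in>cbox y (y+One). L \<le> dist a b)"
  shows "qP P (\<Union>x\<in>F. cbox x (x+One)) \<le> q0 ^ card F"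
  using fin sep
proof (induction F rule: finite_induct)
  case empty
  have "{\<xi> \<in> space P. pcount \<xi> {} = 0} = space P" by (auto simp: pcount_def)
  then show ?case using prob_space.prob_space[OF prob] by (simp add: qP_def)
next
  case (insert x F)
  have q0nn: "0 \<le> q0" using stat[of x] unfolding qP_def by (metis measure_nonneg)
  show ?case
  proof (cases "F = {}")
    case True
    then show ?thesis using stat[of x] by simp
  next
    case False
    have IH: "qP P (\<Union>x\<in>F. cbox x (x+One)) \<le> q0 ^ card F" using insert by blast
    have "qP P (\<Union>y\<in>insert x F. cbox y (y+One)) = qP P (cbox x (x+One) \<union> (\<Union>y\<in>F. cbox y (y+One)))"
      by simp
    also have "\<dots> \<le> qP P (cbox x (x+One)) * qP P (\<Union>y\<in>F. cbox y (y+One))"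
    proof (rule sepL)
      show "(\<Union>y\<in>F. cbox y (y+One)) \<in> sets borel" using insert(1) by (intro sets.finite_UN) auto
      show "bounded (\<Union>y\<in>F. cbox y (y+One))" using insert(1) by (simp add: bounded_UN)
      show "\<forall>a\<in>cbox x (x+One). \<forall>b\<in>\<Union>y\<in>F. cbox y (y+One). L \<le> dist a b"
        using insert(2,4) by fastforce
    qed auto
    also have "\<dots> \<le> q0 * q0 ^ card F"
      using IH q0nn stat[of x] by (simp add: mult_left_mono)
    finally show ?thesis using insert by simp
  qed
qed

lemma main_abstract:
  fixes P :: "'a::euclidean_space set measure"
  assumes prob: "prob_space P" and sP: "sets P = sets N_space"
    and stat: "\<And>x. qP P (cbox x (x+One)) = q0" and q01: "q0 < 1" and L: "1 \<le> L"
    and sepL: "\<And>A B. A \<in> sets borel \<Longrightarrow> bounded A \<Longrightarrow> B \<in> sets borel \<Longrightarrow> bounded B \<Longrightarrow>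
        (\<forall>a\<in>A. \<forall>b\<in>B. L \<le> dist a b) \<Longrightarrow> qP P (A \<union> B) \<le> qP P A * qP P B"
  shows "\<exists>C>0. \<forall>l\<ge>1. qP P (Lambda l) \<le> exp (- C * l ^ DIM('a))"
proof -
  have spP: "space P = lf_sets" using sets_eq_imp_space_eq[OF sP] space_N by simp
  have q0nn: "0 \<le> q0" using stat[of 0] unfolding qP_def by (metis measure_nonneg)
  define s where "s = L + 1"
  define q1 where "q1 = max q0 (1/2)"
  have q1: "0 < q1" "q1 < 1" "q0 \<le> q1" using q01 by (auto simp: q1_def)
  define C where "C = - ln q1 / s ^ DIM('a)"
  have s: "1 \<le> s" "0 < s" using L by (auto simp: s_def)
  have "ln q1 < 0" using q1 by simp
  then have C: "0 < C" unfolding C_def using s by (simp add: divide_neg_pos)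
  show ?thesis
  proof (intro exI[of _ C] conjI allI impI C)
    fix l :: real assume l: "1 \<le> l"
    obtain F :: "'a set" where F: "finite F" "(l/s)^DIM('a) \<le> real (card F)"
      "\<forall>x\<in>F. cbox x (x+One) \<subseteq> Lambda l"
      "\<forall>x\<in>F. \<forall>y\<in>F. x \<noteq> y \<longrightarrow> (\<forall>a\<in>cbox x (x+One). \<forall>b\<in>cbox y (y+One). s - 1 \<le> dist a b)"
      using grid[OF l s(1)] by blast
    have sepF: "\<forall>x\<in>F. \<forall>y\<in>F. x \<noteq> y \<longrightarrow> (\<forall>a\<in>cbox x (x+One). \<forall>b\<in>cbox y (y+One). L \<le> dist a b)"
      using F(4) by (simp add: s_def)
    have bL: "bounded (Lambda l :: 'a set)" by (simp add: Lambda_def)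
    have "{\<xi> \<in> space P. pcount \<xi> (Lambda l) = 0} \<subseteq> {\<xi> \<in> space P. pcount \<xi> (\<Union>x\<in>F. cbox x (x+One)) = 0}"
    proof safe
      fix \<xi> assume \<xi>: "\<xi> \<in> space P" "pcount \<xi> (Lambda l) = 0"
      then have "\<xi> \<inter> Lambda l = {}" using pcount0_iff[OF _ bL] spP by auto
      then have "\<xi> \<inter> (\<Union>x\<in>F. cbox x (x+One)) = {}" using F(3) by blast
      then show "pcount \<xi> (\<Union>x\<in>F. cbox x (x+One)) = 0" by (simp add: pcount_def)
    qed
    moreover have "{\<xi> \<in> space P. pcount \<xi> (\<Union>x\<in>F. cbox x (x+One)) = 0} \<in> sets P"
    proof -
      have "{\<xi> \<in> space P. pcount \<xi> (\<Union>x\<in>F. cbox x (x+One)) = 0} = {\<xi> \<in> lf_sets. pcount \<xi> (\<Union>x\<in>F. cbox x (x+One)) = 0}"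
        using spP by simp
      also have "\<dots> \<in> sets N_space" using F(1) by (intro E_sets) (auto simp: bounded_UN)
      finally show ?thesis using sP by simp
    qed
    ultimately have "qP P (Lambda l) \<le> qP P (\<Union>x\<in>F. cbox x (x+One))"
      unfolding qP_def by (intro finite_measure.finite_measure_mono[OF prob_space.finite_measure[OF prob]])
    also have "\<dots> \<le> q0 ^ card F"
      by (rule prod_bound[OF prob sP stat sepL F(1) sepF])
    also have "\<dots> \<le> q1 ^ card F" using q0nn q1 by (intro power_mono) auto
    also have "\<dots> = exp (real (card F) * ln q1)" using q1 by (simp add: exp_of_nat_mult)
    also have "\<dots> \<le> exp ((l/s)^DIM('a) * ln q1)"
      using F(2) q1 by (intro exp_mono mult_right_mono_neg) auto
    also have "(l/s)^DIM('a) * ln q1 = - C * l ^ DIM('a)"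
      unfolding C_def by (simp add: power_divide)
    finally show "qP P (Lambda l) \<le> exp (- C * l ^ DIM('a))" .
  qed
qed

lemma condC_from_exp:
  fixes P :: "'a::euclidean_space set measure"
  assumes C: "0 < C" and bnd: "\<forall>l\<ge>1. qP P (Lambda l) \<le> exp (- C * l ^ DIM('a))"
    and a: "0 < \<alpha>"
  shows "condition_C P \<alpha>"
  unfolding condition_C_def
proof (intro exI[of _ "(\<alpha>/C) powr \<alpha>"] conjI allI impI)
  show "0 < (\<alpha>/C) powr \<alpha>" using C a by simp
  fix l :: real assume l: "1 \<le> l"
  have "l ^ 1 \<le> l ^ DIM('a)"
    using l DIM_positive[where 'a='a] by (intro power_increasing) auto
  then have "- C * l ^ DIM('a) \<le> - C * l" using C by simp
  then have "exp (- C * l ^ DIM('a)) \<le> exp (- C * l)" by (simp only: exp_le_cancel_iff)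
  also have "exp (- C * l) \<le> (\<alpha>/C) powr \<alpha> * l powr (-\<alpha>)"
  proof -
    define X where "X = C * l / \<alpha>"
    have pos: "0 < X" using C a l by (simp add: X_def)
    have "X \<le> exp X" using exp_ge_add_one_self[of X] by linarith
    then have "X powr \<alpha> \<le> exp X powr \<alpha>"
      using pos a by (intro powr_mono2) auto
    also have "exp X powr \<alpha> = exp (\<alpha> * X)" by (simp add: powr_def)
    also have "\<alpha> * X = C * l" using a by (simp add: X_def)
    finally have e: "X powr \<alpha> \<le> exp (C * l)" .
    have "X = (C/\<alpha>) * l" by (simp add: X_def)
    then have eq: "X powr \<alpha> = (C/\<alpha>) powr \<alpha> * l powr \<alpha>"
      using C a l by (simp only: powr_mult[of "C/\<alpha>" l] less_imp_le divide_pos_pos order_trans[OF zero_le_one])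
    have p1: "0 < (C/\<alpha>) powr \<alpha> * l powr \<alpha>" using C a l by simp
    have "exp (- C * l) = inverse (exp (C * l))" by (simp add: exp_minus)
    also have "\<dots> \<le> inverse ((C/\<alpha>) powr \<alpha> * l powr \<alpha>)"
      using e eq p1 by (intro le_imp_inverse_le) auto
    also have "\<dots> = inverse ((C/\<alpha>) powr \<alpha>) * inverse (l powr \<alpha>)"
      by (simp add: inverse_mult_distrib)
    also have "inverse ((C/\<alpha>) powr \<alpha>) = (\<alpha>/C) powr \<alpha>"
      using C a by (simp add: powr_divide)
    also have "inverse (l powr \<alpha>) = l powr (-\<alpha>)"
      by (simp add: powr_minus)
    finally show ?thesis .
  qed
  finally have "qP P (Lambda l) \<le> (\<alpha>/C) powr \<alpha> * l powr - \<alpha>"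
    using bnd l by (meson order_trans)
  then show "measure P {\<xi> \<in> space P. pcount \<xi> (Lambda l) = 0} \<le> (\<alpha>/C) powr \<alpha> * l powr - \<alpha>"
    by (simp add: qP_def)
qed

lemma lf_sets_Int: "\<xi> \<in> lf_sets \<Longrightarrow> \<xi> \<inter> A \<in> lf_sets"
  unfolding lf_sets_def by (auto intro: finite_subset)

lemma shift_box: "(p - x \<in> cbox 0 (One::'a::euclidean_space)) \<longleftrightarrow> p \<in> cbox x (x + One)"
  by (auto simp: mem_box inner_diff_left inner_add_left One_inner_Basis)

theorem proposition4p6:
  fixes M :: "'w measure"
    and \<theta> :: "'a::euclidean_space \<Rightarrow> 'w \<Rightarrow> 'w"
    and hat :: "'w \<Rightarrow> 'a set"
    and c :: "'a \<Rightarrow> 'a \<Rightarrow> 'w \<Rightarrow> real"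
    and P :: "'a set measure"
  assumes prob: "prob_space M"
    and \<theta>_meas: "(\<lambda>(x, \<omega>). \<theta> x \<omega>) \<in> borel \<Otimes>\<^sub>M M \<rightarrow>\<^sub>M M"
    and \<theta>_zero: "\<And>\<omega>. \<omega> \<in> space M \<Longrightarrow> \<theta> 0 \<omega> = \<omega>"
    and \<theta>_add: "\<And>x y \<omega>. \<omega> \<in> space M \<Longrightarrow> \<theta> (x + y) \<omega> = \<theta> x (\<theta> y \<omega>)"
    and hat_meas: "hat \<in> M \<rightarrow>\<^sub>M N_space"
    and P_def: "P = distr M N_space hat"
    and c_meas: "\<And>x y. c x y \<in> borel_measurable M"
    and c_sym: "\<And>x y \<omega>. \<omega> \<in> space M \<Longrightarrow> c x y \<omega> = c y x \<omega>"
    and c_nonneg: "\<And>x y \<omega>. \<omega> \<in> space M \<Longrightarrow> 0 \<le> c x y \<omega>"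
    and c_DT: "\<And>x y \<omega>. \<omega> \<in> space M \<Longrightarrow> \<not> DT_edge (hat \<omega>) x y \<Longrightarrow> c x y \<omega> = 0"
    and A1_inv: "\<And>x. distr M M (\<theta> x) = M"
    and A1_nonempty: "emeasure M {\<omega> \<in> space M. hat \<omega> = {}} = 0"
    and A2: "0 < (\<integral>\<^sup>+ \<xi>. of_nat (pcount \<xi> (cbox 0 One)) \<partial>P)"
            "(\<integral>\<^sup>+ \<xi>. of_nat (pcount \<xi> (cbox 0 One)) \<partial>P) < \<infinity>"
    and A3: "\<exists>\<Omega>0 \<in> sets M. emeasure M \<Omega>0 = 1 \<and>
               (\<forall>x. \<forall>\<omega>\<in>space M. \<theta> x \<omega> \<in> \<Omega>0 \<longleftrightarrow> \<omega> \<in> \<Omega>0) \<and>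
               (\<forall>\<omega>\<in>\<Omega>0. \<forall>x. hat (\<theta> x \<omega>) = (\<lambda>p. p - x) ` hat \<omega> \<and>
                  (\<forall>y z. DT_edge (hat \<omega>) y z \<longrightarrow> c (y - x) (z - x) (\<theta> x \<omega>) = c y z \<omega>))"
    and dep: "finite_range_dep P \<or> neg_assoc P"
  shows "(\<exists>C>0. \<forall>l\<ge>1. measure P {\<xi> \<in> space P. pcount \<xi> (Lambda l) = 0}
              \<le> exp (- C * l ^ DIM('a)))
         \<and> (\<forall>\<alpha>>0. condition_C P \<alpha>)"
proof -
  interpret M: prob_space M by (rule prob)
  have spP: "space P = lf_sets" unfolding P_def by (simp add: space_N)
  have sP: "sets P = sets N_space" unfolding P_def by simp
  have probP: "prob_space P" unfolding P_def by (rule M.prob_space_distr[OF hat_meas])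
  interpret P: prob_space P by (rule probP)
  have Eset: "{\<xi> \<in> space P. pcount \<xi> S = 0} \<in> sets P" if "S \<in> sets borel" "bounded S" for S
    using E_sets[OF that, of 0] spP sP by simp
  have hat_sp: "hat \<omega> \<in> lf_sets" if "\<omega> \<in> space M" for \<omega>
    using measurable_space[OF hat_meas that] space_N by metis
  have qM: "qP P S = measure M {\<omega> \<in> space M. pcount (hat \<omega>) S = 0}" if "S \<in> sets borel" "bounded S" for S
  proof -
    have "qP P S = measure M (hat -` {\<xi> \<in> space P. pcount \<xi> S = 0} \<inter> space M)"
      unfolding qP_def using Eset[OF that] sP
      by (simp only: P_def) (rule measure_distr[OF hat_meas], simp)
    also have "hat -` {\<xi> \<in> space P. pcount \<xi> S = 0} \<inter> space M = {\<omega> \<in> space M. pcount (hat \<omega>) S = 0}"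
      using hat_sp spP by auto
    finally show ?thesis .
  qed
  have XM: "{\<omega> \<in> space M. pcount (hat \<omega>) S = 0} \<in> sets M" if "S \<in> sets borel" "bounded S" for S
  proof -
    have "hat -` {\<xi> \<in> lf_sets. pcount \<xi> S = 0} \<inter> space M \<in> sets M"
      by (rule measurable_sets[OF hat_meas E_sets[OF that]])
    also have "hat -` {\<xi> \<in> lf_sets. pcount \<xi> S = 0} \<inter> space M = {\<omega> \<in> space M. pcount (hat \<omega>) S = 0}"
      using hat_sp by auto
    finally show ?thesis .
  qed
  obtain \<Omega>0 where O: "\<Omega>0 \<in> sets M" "emeasure M \<Omega>0 = 1"
    "\<And>\<omega> x. \<omega> \<in> \<Omega>0 \<Longrightarrow> hat (\<theta> x \<omega>) = (\<lambda>p. p - x) ` hat \<omega>"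
  proof -
    from A3 obtain \<Omega>0 where a: "\<Omega>0 \<in> sets M" and b: "emeasure M \<Omega>0 = 1"
      and cc: "\<forall>\<omega>\<in>\<Omega>0. \<forall>x. hat (\<theta> x \<omega>) = (\<lambda>p. p - x) ` hat \<omega> \<and>
                  (\<forall>y z. DT_edge (hat \<omega>) y z \<longrightarrow> c (y - x) (z - x) (\<theta> x \<omega>) = c y z \<omega>)"
      by (elim bexE conjE)
    have c': "\<And>\<omega> x. \<omega> \<in> \<Omega>0 \<Longrightarrow> hat (\<theta> x \<omega>) = (\<lambda>p. p - x) ` hat \<omega>"
      using cc by simp
    show ?thesis by (rule that[OF a b c'])
  qed
  have AEO: "AE \<omega> in M. \<omega> \<in> \<Omega>0"
    using O(1,2) M.AE_in_set_eq_1[OF O(1)] by (simp add: M.emeasure_eq_measure)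
  have thmeas: "\<theta> x \<in> M \<rightarrow>\<^sub>M M" for x
    using measurable_compose[OF measurable_Pair1'[of x borel M] \<theta>_meas] by simp
  define q0 where "q0 = qP P (cbox 0 One)"
  have stat: "qP P (cbox x (x+One)) = q0" for x
  proof -
    have "q0 = measure M {\<omega> \<in> space M. pcount (hat \<omega>) (cbox 0 One) = 0}"
      unfolding q0_def by (rule qM) auto
    also have "\<dots> = measure (distr M M (\<theta> x)) {\<omega> \<in> space M. pcount (hat \<omega>) (cbox 0 One) = 0}"
      using A1_inv[of x] by simp
    also have "\<dots> = measure M (\<theta> x -` {\<omega> \<in> space M. pcount (hat \<omega>) (cbox 0 One) = 0} \<inter> space M)"
      by (rule measure_distr[OF thmeas XM]) auto
    also have "\<dots> = measure M {\<omega> \<in> space M. pcount (hat \<omega>) (cbox x (x+One)) = 0}"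
    proof (rule measure_eq_AE)
      show "AE \<omega> in M. (\<omega> \<in> \<theta> x -` {\<omega> \<in> space M. pcount (hat \<omega>) (cbox 0 One) = 0} \<inter> space M) =
          (\<omega> \<in> {\<omega> \<in> space M. pcount (hat \<omega>) (cbox x (x+One)) = 0})"
        using AEO
      proof eventually_elim
        case (elim \<omega>)
        show ?case
        proof (cases "\<omega> \<in> space M")
          case True
          have ts: "\<theta> x \<omega> \<in> space M" using measurable_space[OF thmeas True] .
          have "pcount (hat (\<theta> x \<omega>)) (cbox 0 One) = 0 \<longleftrightarrow> hat (\<theta> x \<omega>) \<inter> cbox 0 One = {}"
            by (rule pcount0_iff[OF hat_sp[OF ts]]) auto
          also have "\<dots> \<longleftrightarrow> hat \<omega> \<inter> cbox x (x+One) = {}"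
            using O(3)[OF elim, of x] shift_box by auto
          also have "\<dots> \<longleftrightarrow> pcount (hat \<omega>) (cbox x (x+One)) = 0"
            by (rule pcount0_iff[OF hat_sp[OF True], symmetric]) auto
          finally show ?thesis using True ts by auto
        qed auto
      qed
      show "\<theta> x -` {\<omega> \<in> space M. pcount (hat \<omega>) (cbox 0 One) = 0} \<inter> space M \<in> sets M"
        by (rule measurable_sets[OF thmeas XM]) auto
      show "{\<omega> \<in> space M. pcount (hat \<omega>) (cbox x (x+One)) = 0} \<in> sets M"
        by (rule XM) auto
    qed
    also have "\<dots> = qP P (cbox x (x+One))" by (rule qM[symmetric]) auto
    finally show ?thesis ..
  qed
  have q01: "q0 < 1"
  proof (rule ccontr)
    assume "\<not> q0 < 1"
    then have "P.prob {\<xi> \<in> space P. pcount \<xi> (cbox 0 One) = 0} = 1"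
      using P.prob_le_1 unfolding q0_def qP_def by (meson antisym not_le)
    then have "AE \<xi> in P. \<xi> \<in> {\<xi> \<in> space P. pcount \<xi> (cbox 0 One) = 0}"
      using P.AE_in_set_eq_1[OF Eset] by auto
    then have "AE \<xi> in P. (of_nat (pcount \<xi> (cbox 0 One)) :: ennreal) = 0" by (auto elim: AE_mp)
    then have "(\<integral>\<^sup>+ \<xi>. of_nat (pcount \<xi> (cbox 0 One)) \<partial>P) = (\<integral>\<^sup>+ \<xi>. 0 \<partial>P)"
      by (rule nn_integral_cong_AE)
    then show False using A2(1) by simp
  qed
  have sepL: "\<exists>L\<ge>1. \<forall>A B. A \<in> sets borel \<longrightarrow> bounded A \<longrightarrow> B \<in> sets borel \<longrightarrow> bounded B \<longrightarrow>
        (\<forall>a\<in>A. \<forall>b\<in>B. L \<le> dist a b) \<longrightarrow> qP P (A \<union> B) \<le> qP P A * qP P B"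
  proof -
    have qempty: "qP P {} = 1"
    proof -
      have "{\<xi> \<in> space P. pcount \<xi> {} = 0} = space P" by (auto simp: pcount_def)
      then show ?thesis by (simp add: qP_def P.prob_space)
    qed
    have pc_Un: "pcount \<xi> (A \<union> B) = 0 \<longleftrightarrow> pcount \<xi> A = 0 \<and> pcount \<xi> B = 0"
      if "\<xi> \<in> lf_sets" "bounded A" "bounded B" for \<xi> A B
      using pcount0_iff[OF that(1)] that(2,3) by (auto simp: bounded_Un)
    have pc_Int: "pcount (\<xi> \<inter> A) A = pcount \<xi> A" for \<xi> A
      by (simp add: pcount_def Int_assoc)
    from dep show ?thesis
    proof
      assume "finite_range_dep P"
      then obtain L0 where L0: "L0 > 0" and ind: "\<And>A B. A \<in> sets borel \<Longrightarrow> B \<in> sets borel \<Longrightarrow>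
          setdist A B \<ge> L0 \<Longrightarrow> P.indep_var N_space (\<lambda>\<xi>. \<xi> \<inter> A) N_space (\<lambda>\<xi>. \<xi> \<inter> B)"
        unfolding finite_range_dep_def by blast
      show ?thesis
      proof (intro exI[of _ "max L0 1"] conjI allI impI)
        fix A B :: "'a set"
        assume A: "A \<in> sets borel" "bounded A" and B: "B \<in> sets borel" "bounded B"
          and d: "\<forall>a\<in>A. \<forall>b\<in>B. max L0 1 \<le> dist a b"
        show "qP P (A \<union> B) \<le> qP P A * qP P B"
        proof (cases "A = {} \<or> B = {}")
          case True
          then show ?thesis using qempty by auto
        next
          case False
          have sd: "L0 \<le> setdist A B"
            using False d by (intro le_setdistI) force+
          have XA: "{\<zeta> \<in> lf_sets. pcount \<zeta> A = 0} \<in> sets N_space" by (rule E_sets[OF A])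
          have XB: "{\<zeta> \<in> lf_sets. pcount \<zeta> B = 0} \<in> sets N_space" by (rule E_sets[OF B])
          have eq: "P.prob ((\<lambda>\<xi>. (\<xi> \<inter> A, \<xi> \<inter> B)) -` ({\<zeta> \<in> lf_sets. pcount \<zeta> A = 0} \<times> {\<zeta> \<in> lf_sets. pcount \<zeta> B = 0}) \<inter> space P) =
            P.prob ((\<lambda>\<xi>. \<xi> \<inter> A) -` {\<zeta> \<in> lf_sets. pcount \<zeta> A = 0} \<inter> space P) *
            P.prob ((\<lambda>\<xi>. \<xi> \<inter> B) -` {\<zeta> \<in> lf_sets. pcount \<zeta> B = 0} \<inter> space P)"
            by (rule P.indep_varD[OF ind[OF A(1) B(1) sd] XA XB])
          have e1: "(\<lambda>\<xi>. (\<xi> \<inter> A, \<xi> \<inter> B)) -` ({\<zeta> \<in> lf_sets. pcount \<zeta> A = 0} \<times> {\<zeta> \<in> lf_sets. pcount \<zeta> B = 0}) \<inter> space P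
              = {\<xi> \<in> space P. pcount \<xi> (A \<union> B) = 0}"
            using spP pc_Un[OF _ A(2) B(2)] lf_sets_Int by (auto simp: pc_Int)
          have e2: "(\<lambda>\<xi>. \<xi> \<inter> S) -` {\<zeta> \<in> lf_sets. pcount \<zeta> S = 0} \<inter> space P = {\<xi> \<in> space P. pcount \<xi> S = 0}" for S
            using spP lf_sets_Int by (auto simp: pc_Int)
          show ?thesis using eq unfolding e1 e2 qP_def by simp
        qed
      qed simp
    next
      assume na: "neg_assoc P"
      show ?thesis
      proof (intro exI[of _ 1] conjI allI impI)
        fix A B :: "'a set"
        assume A: "A \<in> sets borel" "bounded A" and B: "B \<in> sets borel" "bounded B"
          and d: "\<forall>a\<in>A. \<forall>b\<in>B. 1 \<le> dist a b"
        have disj: "A \<inter> B = {}" using d by fastforce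
        define f :: "(nat \<Rightarrow> real) \<Rightarrow> real" where "f u = - (if u 0 = 0 then 1 else 0)" for u
        have incr: "incr_on_orthant 1 f" unfolding incr_on_orthant_def f_def by auto
        have fcv: "f (count_vec 1 (\<lambda>_. S) \<xi>) = - indicator {\<xi>. pcount \<xi> S = 0} \<xi>" for S \<xi>
          by (simp add: f_def count_vec_def indicator_def)
        have sq: "(\<lambda>\<xi>. (f (count_vec 1 (\<lambda>_. S) \<xi>))\<^sup>2) = indicator {\<xi>. pcount \<xi> S = 0}" for S
          by (rule ext) (simp add: f_def count_vec_def indicator_def)
        have int: "integrable P (indicator {\<xi>. pcount \<xi> S = 0} :: _ \<Rightarrow> real)"
          if "S \<in> sets borel" "bounded S" for S
        proof -
          have "integrable P (indicator {\<xi> \<in> space P. pcount \<xi> S = 0} :: _ \<Rightarrow> real)"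
            using Eset[OF that] by (intro integrable_real_indicator) (auto simp: P.emeasure_eq_measure)
          moreover have "integrable P (indicator {\<xi> \<in> space P. pcount \<xi> S = 0} :: _ \<Rightarrow> real) \<longleftrightarrow>
              integrable P (indicator {\<xi>. pcount \<xi> S = 0} :: _ \<Rightarrow> real)"
            by (rule Bochner_Integration.integrable_cong[OF refl]) (auto simp: indicator_def)
          ultimately show ?thesis by simp
        qed
        have "(\<integral>\<xi>. f (count_vec 1 (\<lambda>_. A) \<xi>) * f (count_vec 1 (\<lambda>_. B) \<xi>) \<partial>P)
          - (\<integral>\<xi>. f (count_vec 1 (\<lambda>_. A) \<xi>) \<partial>P) * (\<integral>\<xi>. f (count_vec 1 (\<lambda>_. B) \<xi>) \<partial>P) \<le> 0"
          apply (rule na[unfolded neg_assoc_def, rule_format, where n=1 and k=1 and f=f and g=f and A="\<lambda>_. A" and B="\<lambda>_. B"])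
          using incr A B disj int[OF A, folded sq] int[OF B, folded sq] by (auto simp: sq disjoint_family_on_def)
        moreover have "(\<lambda>\<xi>. f (count_vec 1 (\<lambda>_. A) \<xi>) * f (count_vec 1 (\<lambda>_. B) \<xi>)) =
            indicator {\<xi>. pcount \<xi> A = 0 \<and> pcount \<xi> B = 0}"
          by (rule ext) (simp add: f_def count_vec_def indicator_def)
        moreover have "{\<xi>. pcount \<xi> A = 0 \<and> pcount \<xi> B = 0} \<inter> space P = {\<xi> \<in> space P. pcount \<xi> (A \<union> B) = 0}"
          using spP pc_Un[OF _ A(2) B(2)] by auto
        moreover have "{\<xi>. pcount \<xi> S = 0} \<inter> space P = {\<xi> \<in> space P. pcount \<xi> S = 0}" for S
          by auto
        ultimately show "qP P (A \<union> B) \<le> qP P A * qP P B"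
          unfolding qP_def fcv by simp
      qed simp
    qed
  qed
  then obtain L where L: "1 \<le> L" and sepL': "\<And>A B. A \<in> sets borel \<Longrightarrow> bounded A \<Longrightarrow> B \<in> sets borel \<Longrightarrow> bounded B \<Longrightarrow>
        (\<forall>a\<in>A. \<forall>b\<in>B. L \<le> dist a b) \<Longrightarrow> qP P (A \<union> B) \<le> qP P A * qP P B"
    by blast
  obtain C where C: "0 < C" "\<forall>l\<ge>1. qP P (Lambda l) \<le> exp (- C * l ^ DIM('a))"
    using main_abstract[OF probP sP stat q01 L sepL'] by blast
  show ?thesis
    using C condC_from_exp[OF C] unfolding qP_def by blast
qed

end
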